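(* Let $\mathbb{F}\in\{\mathbb{R},\mathbb{C}\}$, let $N\ge2$, $M\ge2$ and $1\le Q\le M$ be integers, write $\mathcal{M}=\{1,\dots,M\}$, let $0<\epsilon<1$, and let $\mathbf{H}_1,\dots,\mathbf{H}_M$ be $N\times N$ positive semidefinite matrices (real symmetric if $\mathbb{F}=\mathbb{R}$, Hermitian if $\mathbb{F}=\mathbb{C}$). Let $(\hat{\boldsymbol\beta},\widehat{\mathbf{X}}^{(2)})$ be an optimal solution of (SDP3): maximize $\mathrm{Tr}[\mathbf{X}^{(2)}]$ over $\boldsymbol\beta\in\mathbb{R}^M$ and $N\times N$ matrices $\mathbf{X}^{(2)}\succeq0$ (real symmetric if $\mathbb{F}=\mathbb{R}$, Hermitian if $\mathbb{F}=\mathbb{C}$) subject to $\mathrm{Tr}[\mathbf{H}_i\mathbf{X}^{(2)}]\le\beta_i\epsilon+(1-\beta_i)$ for $i\in\mathcal{M}$, $\sum_{i\in\mathcal{M}}\beta_i=Q$, $0\le\beta_i\le1$. Let $\hat{\boldsymbol\beta}_{[Q]}$ be the $Q$-th largest entry of $\hat{\boldsymbol\beta}$ and $\widehat{\mathcal{I}}=\{i\in\mathcal{M}:\hat{\boldsymbol\beta}[i]\ge\hat{\boldsymbol\beta}_{[Q]}\}$. Then $\hat{\boldsymbol\beta}[i]\ge\frac{1}{M-Q+1}$ for all $i\in\widehat{\mathcal{I}}$.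
   Context: $\hat{\boldsymbol\beta}[i]$ denotes the $i$-th entry of $\hat{\boldsymbol\beta}$. *)

theory Defs
  imports "HOL-Analysis.Analysis"
begin

definition real_psd :: "real^'n^'n \<Rightarrow> bool" where
  "real_psd A \<longleftrightarrow> transpose A = A \<and> (\<forall>x::real^'n. 0 \<le> x \<bullet> (A *v x))"

definition complex_psd :: "complex^'n^'n \<Rightarrow> bool" where
  "complex_psd A \<longleftrightarrow> (\<forall>i j. A $ i $ j = cnj (A $ j $ i)) \<and>
     (\<forall>x::complex^'n. 0 \<le> Re (\<Sum>i\<in>UNIV. cnj (x $ i) * (A *v x) $ i))"

definition sdp3_feasible_real ::
  "nat \<Rightarrow> nat \<Rightarrow> real \<Rightarrow> (nat \<Rightarrow> real^'n^'n) \<Rightarrow> (nat \<Rightarrow> real) \<Rightarrow> real^'n^'n \<Rightarrow> bool" where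
  "sdp3_feasible_real M Q \<epsilon> H \<beta> X \<longleftrightarrow>
     real_psd X \<and>
     (\<forall>i\<in>{1..M}. trace (H i ** X) \<le> \<beta> i * \<epsilon> + (1 - \<beta> i)) \<and>
     (\<Sum>i=1..M. \<beta> i) = real Q \<and>
     (\<forall>i\<in>{1..M}. 0 \<le> \<beta> i \<and> \<beta> i \<le> 1)"

definition sdp3_optimal_real ::
  "nat \<Rightarrow> nat \<Rightarrow> real \<Rightarrow> (nat \<Rightarrow> real^'n^'n) \<Rightarrow> (nat \<Rightarrow> real) \<Rightarrow> real^'n^'n \<Rightarrow> bool" where
  "sdp3_optimal_real M Q \<epsilon> H \<beta> X \<longleftrightarrow>
     sdp3_feasible_real M Q \<epsilon> H \<beta> X \<and>
     (\<forall>\<beta>' X'. sdp3_feasible_real M Q \<epsilon> H \<beta>' X' \<longrightarrow> trace X' \<le> trace X)"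

text \<open>Feasibility for (SDP3), complex case (traces of products of Hermitian
  matrices are real; we compare their real parts).\<close>
definition sdp3_feasible_complex ::
  "nat \<Rightarrow> nat \<Rightarrow> real \<Rightarrow> (nat \<Rightarrow> complex^'n^'n) \<Rightarrow> (nat \<Rightarrow> real) \<Rightarrow> complex^'n^'n \<Rightarrow> bool" where
  "sdp3_feasible_complex M Q \<epsilon> H \<beta> X \<longleftrightarrow>
     complex_psd X \<and>
     (\<forall>i\<in>{1..M}. Re (trace (H i ** X)) \<le> \<beta> i * \<epsilon> + (1 - \<beta> i)) \<and>
     (\<Sum>i=1..M. \<beta> i) = real Q \<and>
     (\<forall>i\<in>{1..M}. 0 \<le> \<beta> i \<and> \<beta> i \<le> 1)"

definition sdp3_optimal_complex ::
  "nat \<Rightarrow> nat \<Rightarrow> real \<Rightarrow> (nat \<Rightarrow> complex^'n^'n) \<Rightarrow> (nat \<Rightarrow> real) \<Rightarrow> complex^'n^'n \<Rightarrow> bool" where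
  "sdp3_optimal_complex M Q \<epsilon> H \<beta> X \<longleftrightarrow>
     sdp3_feasible_complex M Q \<epsilon> H \<beta> X \<and>
     (\<forall>\<beta>' X'. sdp3_feasible_complex M Q \<epsilon> H \<beta>' X' \<longrightarrow> Re (trace X') \<le> Re (trace X))"

definition qth_largest :: "nat \<Rightarrow> nat \<Rightarrow> (nat \<Rightarrow> real) \<Rightarrow> real" where
  "qth_largest M Q \<beta> = rev (sort (map \<beta> [1..<M+1])) ! (Q - 1)"

end

theory Submission
  imports Defs
begin

lemma qth:
  fixes \<beta> :: "nat \<Rightarrow> real"
  assumes Q1: "1 \<le> Q" and QM: "Q \<le> M"
    and sum: "(\<Sum>i=1..M. \<beta> i) = real Q" and b: "\<forall>i\<in>{1..M}. 0 \<le> \<beta> i \<and> \<beta> i \<le> 1"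
  shows "qth_largest M Q \<beta> \<ge> 1 / (real M - real Q + 1)"
proof -
  define ys where "ys = sort (map \<beta> [1..<M+1])"
  define xs where "xs = rev ys"
  have lys: "length ys = M" by (simp add: ys_def)
  have lxs: "length xs = M" by (simp add: xs_def lys)
  have sys: "sorted ys" by (simp add: ys_def)
  have setx: "set xs = \<beta> ` {1..M}" by (auto simp: xs_def ys_def)
  have sumx: "sum_list xs = real Q"
  proof -
    have "sum_list xs = sum_list ys" by (simp add: xs_def)
    also have "\<dots> = sum_list (map \<beta> [1..<M+1])"
      by (metis mset_sort sum_mset_sum_list ys_def)
    also have "\<dots> = (\<Sum>i=1..M. \<beta> i)"
      by (simp add: sum_list_distinct_conv_sum_set atLeastLessThanSuc_atLeastAtMost del: upt_Suc)
    finally show ?thesis using sum by simp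
  qed
  define v where "v = xs ! (Q - 1)"
  have qv: "qth_largest M Q \<beta> = v" by (simp add: qth_largest_def v_def xs_def ys_def)
  have le1: "xs ! j \<le> 1" if "j < M" for j
  proof -
    have "xs ! j \<in> set xs" using that lxs by simp
    then show ?thesis using setx b by auto
  qed
  have lev: "xs ! j \<le> v" if "Q - 1 \<le> j" "j < M" for j
  proof -
    have "xs ! j = ys ! (M - 1 - j)" using that lys by (simp add: xs_def rev_nth)
    moreover have "v = ys ! (M - 1 - (Q - 1))" using that lys QM Q1 by (simp add: v_def xs_def rev_nth)
    moreover have "ys ! (M - 1 - j) \<le> ys ! (M - 1 - (Q - 1))"
      using sys that lys by (intro sorted_nth_mono) auto
    ultimately show ?thesis by simp
  qed
  have "sum_list xs = (\<Sum>j = 0..<M. xs ! j)" by (simp add: sum_list_sum_nth lxs)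
  also have "\<dots> = (\<Sum>j = 0..<Q-1. xs ! j) + (\<Sum>j = Q-1..<M. xs ! j)"
    using QM by (simp add: sum.atLeastLessThan_concat)
  also have "\<dots> \<le> (\<Sum>j = 0..<Q-1. 1) + (\<Sum>j = Q-1..<M. v)"
    using QM by (intro add_mono sum_mono) (auto intro: le1 lev)
  also have "\<dots> = real (Q - 1) + real (M - (Q - 1)) * v" by simp
  finally have "real Q \<le> real (Q - 1) + real (M - (Q - 1)) * v" using sumx by linarith
  then have "1 \<le> (real M - real Q + 1) * v" using Q1 QM by (simp add: of_nat_diff algebra_simps)
  moreover have "real M - real Q + 1 > 0" using QM by simp
  ultimately show ?thesis using qv by (simp add: divide_le_eq mult.commute)
qed

theorem lemma3p1:
  fixes M Q :: nat and \<epsilon> :: real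
  assumes "CARD('n) \<ge> 2" and "M \<ge> 2" and "1 \<le> Q" and "Q \<le> M"
    and "0 < \<epsilon>" and "\<epsilon> < 1"
  shows
    "(\<forall>(H :: nat \<Rightarrow> real^'n^'n) \<beta> X.
        (\<forall>i\<in>{1..M}. real_psd (H i)) \<and> sdp3_optimal_real M Q \<epsilon> H \<beta> X \<longrightarrow>
        (\<forall>i\<in>{i\<in>{1..M}. \<beta> i \<ge> qth_largest M Q \<beta>}. \<beta> i \<ge> 1 / (real M - real Q + 1)))
   \<and> (\<forall>(H :: nat \<Rightarrow> complex^'n^'n) \<beta> X.
        (\<forall>i\<in>{1..M}. complex_psd (H i)) \<and> sdp3_optimal_complex M Q \<epsilon> H \<beta> X \<longrightarrow>
        (\<forall>i\<in>{i\<in>{1..M}. \<beta> i \<ge> qth_largest M Q \<beta>}. \<beta> i \<ge> 1 / (real M - real Q + 1)))"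
proof (intro conjI allI impI ballI)
  fix H :: "nat \<Rightarrow> real^'n^'n" and \<beta> X i
  assume h: "(\<forall>i\<in>{1..M}. real_psd (H i)) \<and> sdp3_optimal_real M Q \<epsilon> H \<beta> X"
    and i: "i \<in> {i\<in>{1..M}. \<beta> i \<ge> qth_largest M Q \<beta>}"
  have "qth_largest M Q \<beta> \<ge> 1 / (real M - real Q + 1)"
    using h assms by (intro qth) (auto simp: sdp3_optimal_real_def sdp3_feasible_real_def)
  then show "\<beta> i \<ge> 1 / (real M - real Q + 1)" using i by auto
next
  fix H :: "nat \<Rightarrow> complex^'n^'n" and \<beta> X i
  assume h: "(\<forall>i\<in>{1..M}. complex_psd (H i)) \<and> sdp3_optimal_complex M Q \<epsilon> H \<beta> X"
    and i: "i \<in> {i\<in>{1..M}. \<beta> i \<ge> qth_largest M Q \<beta>}"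
  have "qth_largest M Q \<beta> \<ge> 1 / (real M - real Q + 1)"
    using h assms by (intro qth) (auto simp: sdp3_optimal_complex_def sdp3_feasible_complex_def)
  then show "\<beta> i \<ge> 1 / (real M - real Q + 1)" using i by auto
qed

end
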